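(* Let $c_1\ge\dots\ge c_{m+1}\ge0$ and $d_1\ge\dots\ge d_m\ge0$ be integers. Let $(r_1,r_2,\dots)$ and $(s_1,s_2,\dots)$ be the conjugate partitions of $(c_1,\dots,c_{m+1})$ and $(d_1,\dots,d_m)$, and $r_0=m+1=s_0+1$. Let $g=\max\{i\ge0: r_i>s_i\}$ and $h=\min\{i\ge1: d_i<c_i\}$, with the convention $d_{m+1}=-\infty$. Then $g=c_h$ and $$\sum_{j=1}^{g}(r_j-s_j-1)=\sum_{j=h}^{m}(c_{j+1}-d_j).$$
   Context: The conjugate of a finite nonincreasing sequence $(a_1,\dots,a_n)$ of nonnegative integers is $(\bar a_1,\bar a_2,\dots)$ with $\bar a_k=\#\{i: a_i\ge k\}$ for $k\ge1$. *)

theory Defs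
  imports Main
begin

text \<open>For k = 0 this gives n, which agrees with
  the paper's conventions r_0 = m+1 and s_0 = m.\<close>
definition conj_seq :: "nat \<Rightarrow> (nat \<Rightarrow> nat) \<Rightarrow> nat \<Rightarrow> nat" where
  "conj_seq n a k = card {i \<in> {1..n}. k \<le> a i}"

end

theory Submission
  imports Defs
begin

lemma count_swap:
  fixes f :: "nat \<Rightarrow> nat"
  assumes "finite I" "\<forall>i\<in>I. f i \<le> g"
  shows "(\<Sum>j=1..g. card {i\<in>I. j \<le> f i}) = (\<Sum>i\<in>I. f i)"
proof -
  have "(\<Sum>j=1..g. card {i\<in>I. j \<le> f i}) = (\<Sum>j=1..g. \<Sum>i\<in>I. if j \<le> f i then 1 else 0)"
    using assms(1) by (simp add: sum.If_cases Collect_conj_eq Int_commute)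
  also have "\<dots> = (\<Sum>i\<in>I. \<Sum>j=1..g. if j \<le> f i then 1 else 0)"
    by (rule sum.swap)
  also have "\<dots> = (\<Sum>i\<in>I. f i)"
  proof (rule sum.cong)
    fix i assume "i \<in> I"
    hence "f i \<le> g" using assms by auto
    hence "{1..g} \<inter> {j. j \<le> f i} = {1..f i}" by auto
    thus "(\<Sum>j=1..g. if j \<le> f i then 1 else (0::nat)) = f i"
      by (simp add: sum.If_cases)
  qed simp
  finally show ?thesis .
qed

theorem lemma4p4:
  fixes m :: nat and c d :: "nat \<Rightarrow> nat"
  assumes c_mono: "\<And>i j. 1 \<le> i \<Longrightarrow> i \<le> j \<Longrightarrow> j \<le> m + 1 \<Longrightarrow> c j \<le> c i"
    and d_mono: "\<And>i j. 1 \<le> i \<Longrightarrow> i \<le> j \<Longrightarrow> j \<le> m \<Longrightarrow> d j \<le> d i"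
  defines "r \<equiv> conj_seq (m + 1) c"
    and "s \<equiv> conj_seq m d"
  defines "g \<equiv> GREATEST i. s i < r i"
    and "h \<equiv> LEAST i. 1 \<le> i \<and> i \<le> m + 1 \<and> (i = m + 1 \<or> d i < c i)"
  shows "g = c h \<and>
    (\<Sum>j = 1..g. int (r j) - int (s j) - 1) = (\<Sum>j = h..m. int (c (j + 1)) - int (d j))"
proof -
  let ?P = "\<lambda>i. 1 \<le> i \<and> i \<le> m + 1 \<and> (i = m + 1 \<or> d i < c i)"
  have Ph: "?P h" unfolding h_def by (rule LeastI[of _ "m+1"]) simp
  have h1: "1 \<le> h" and hm: "h \<le> m + 1" and hd: "h = m + 1 \<or> d h < c h" using Ph by auto
  have below: "c i \<le> d i" if "1 \<le> i" "i < h" for i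
  proof -
    have "\<not> ?P i" using that(2) unfolding h_def by (rule not_less_Least)
    thus ?thesis using that hm by auto
  qed
  have cge: "c h \<le> c i" if "1 \<le> i" "i \<le> h" for i using c_mono that hm by auto
  have dlt: "d i < c h" if "h \<le> i" "i \<le> m" for i
  proof -
    have "h \<noteq> m+1" using that by auto
    hence "d h < c h" using hd by auto
    moreover have "d i \<le> d h" using d_mono that h1 by auto
    ultimately show ?thesis by simp
  qed
  have cle: "c i \<le> c h" if "h \<le> i" "i \<le> m+1" for i using c_mono that h1 by auto
  have rdec: "r j = h + card {i\<in>{h+1..m+1}. j \<le> c i}" if "j \<le> c h" for j
  proof -
    have "{i\<in>{1..m+1}. j \<le> c i} = {1..h} \<union> {i\<in>{h+1..m+1}. j \<le> c i}"
      using cge[of] that hm by (auto intro: order.trans)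
    moreover have "card ({1..h} \<union> {i\<in>{h+1..m+1}. j \<le> c i}) = h + card {i\<in>{h+1..m+1}. j \<le> c i}"
      by (subst card_Un_disjoint) auto
    ultimately show ?thesis unfolding r_def conj_seq_def by simp
  qed
  have sdec: "s j = (h - 1) + card {i\<in>{h..m}. j \<le> d i}" if "j \<le> c h" for j
  proof -
    have "{i\<in>{1..m}. j \<le> d i} = {1..h-1} \<union> {i\<in>{h..m}. j \<le> d i}"
    proof (intro equalityI subsetI)
      fix i assume "i \<in> {i\<in>{1..m}. j \<le> d i}"
      thus "i \<in> {1..h-1} \<union> {i\<in>{h..m}. j \<le> d i}" by auto
    next
      fix i assume "i \<in> {1..h-1} \<union> {i\<in>{h..m}. j \<le> d i}"
      moreover have "j \<le> d i" if "i \<in> {1..h-1}"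
        using that below[of i] cge[of i] \<open>j \<le> c h\<close> h1 by fastforce
      ultimately show "i \<in> {i\<in>{1..m}. j \<le> d i}" using hm h1 by auto
    qed
    moreover have "card ({1..h-1} \<union> {i\<in>{h..m}. j \<le> d i}) = (h-1) + card {i\<in>{h..m}. j \<le> d i}"
      by (subst card_Un_disjoint) auto
    ultimately show ?thesis unfolding s_def conj_seq_def by simp
  qed
  have gch: "g = c h"
    unfolding g_def
  proof (rule Greatest_equality)
    have "{i\<in>{h..m}. c h \<le> d i} = {}" using dlt by force
    hence "s (c h) = h - 1" using sdec[of "c h"] by simp
    moreover have "r (c h) \<ge> h" using rdec[of "c h"] by simp
    ultimately show "s (c h) < r (c h)" using h1 by linarith
  next
    fix y assume y: "s y < r y"
    show "y \<le> c h"
    proof (rule ccontr)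
      assume "\<not> y \<le> c h"
      hence yc: "c h < y" by simp
      have "{i\<in>{1..m+1}. y \<le> c i} \<subseteq> {i\<in>{1..m}. y \<le> d i}"
      proof
        fix i assume i: "i \<in> {i\<in>{1..m+1}. y \<le> c i}"
        have "\<not> h \<le> i"
        proof
          assume "h \<le> i" hence "c i \<le> c h" using cle i by auto
          thus False using i yc by simp
        qed
        hence "i < h" by simp
        hence "c i \<le> d i" "i \<le> m" using below i hm by auto
        thus "i \<in> {i\<in>{1..m}. y \<le> d i}" using i by auto
      qed
      hence "r y \<le> s y" unfolding r_def s_def conj_seq_def by (intro card_mono) auto
      thus False using y by simp
    qed
  qed
  have "(\<Sum>j = 1..g. int (r j) - int (s j) - 1)
      = (\<Sum>j = 1..g. int (card {i\<in>{h+1..m+1}. j \<le> c i}) - int (card {i\<in>{h..m}. j \<le> d i}))"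
    by (rule sum.cong) (use rdec sdec gch h1 in auto)
  also have "\<dots> = int (\<Sum>j = 1..g. card {i\<in>{h+1..m+1}. j \<le> c i}) - int (\<Sum>j = 1..g. card {i\<in>{h..m}. j \<le> d i})"
    by (simp add: sum_subtractf)
  also have "\<dots> = int (\<Sum>i\<in>{h+1..m+1}. c i) - int (\<Sum>i\<in>{h..m}. d i)"
  proof -
    have "(\<Sum>j = 1..g. card {i\<in>{h+1..m+1}. j \<le> c i}) = (\<Sum>i\<in>{h+1..m+1}. c i)"
      by (rule count_swap) (use cle gch in auto)
    moreover have "(\<Sum>j = 1..g. card {i\<in>{h..m}. j \<le> d i}) = (\<Sum>i\<in>{h..m}. d i)"
      by (rule count_swap) (use dlt gch in \<open>auto intro: less_imp_le\<close>)
    ultimately show ?thesis by simp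
  qed
  also have "\<dots> = (\<Sum>j = h..m. int (c (j + 1)) - int (d j))"
  proof -
    have "(\<Sum>i\<in>{h+1..m+1}. c i) = (\<Sum>j = h..m. c (j + 1))"
      using sum.shift_bounds_cl_Suc_ivl[of c h m] by simp
    thus ?thesis by (simp add: sum_subtractf)
  qed
  finally show ?thesis using gch by simp
qed

end
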